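(* Let $\varphi$ be an LTL formula over $2^{V_i}$ and let $\mathcal{A}_\varphi$ be an ACA with $\mathcal{L}(\mathcal{A}_\varphi)=\mathcal{L}(\varphi)$. If there exists a strategy for process $p_i$ that is winning for $\varphi$ (i.e. $\varphi$ is realizable by $p_i$), then every strategy for $p_i$ that is delay-dominant for $\mathcal{A}_\varphi$ is winning for $\varphi$.
   Context: Automata. For a finite set $\Sigma$ of atomic propositions, an alternating co-Büchi automaton (ACA) over $2^\Sigma$ is a tuple $\mathcal{A}=(Q,q_0,\delta,F)$ with a finite set of states $Q$, initial state $q_0\in Q$, set of rejecting states $F\subseteq Q$, and transition function $\delta:Q\times 2^\Sigma\to\mathbb{B}^+(Q)$ into positive Boolean formulas over $Q$ given in disjunctive normal form; $\delta(q,a)$ is identified with the set of its disjuncts, each disjunct $c\in\delta(q,a)$ being a set of states. A run tree of $\mathcal{A}$ on $\sigma=\sigma_0\sigma_1\cdots\in(2^\Sigma)^\omega$ is a $Q$-labeled tree $(T,\ell)$ ($T\subseteq\mathbb{N}^*$ prefix-closed) with $\ell(\varepsilon)=q_0$ and $\{\ell(x')\mid x'\text{ a child of }x\}\in\delta(\ell(x),\sigma_{|x|})$ for every node $x$; it is accepting if every infinite branch visits $F$ only finitely often. $\mathcal{A}$ accepts $\sigma$ if some run tree on $\sigma$ is accepting; $\mathcal{L}(\mathcal{A})$ is the set of accepted words. For an LTL formula $\varphi$, $\mathcal{L}(\varphi)$ is the set of infinite words satisfying $\varphi$. (As implicit in the game below, each $\delta(q,a)$ and each of its disjuncts is nonempty.)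 Processes and strategies. A process $p_i$ has disjoint finite sets $I_i$ of input and $O_i$ of output variables; $V_i=I_i\cup O_i$. A strategy for $p_i$ is a function $s:(2^{I_i})^*\to 2^{O_i}$ representable by a finite Moore machine. For $\gamma\in(2^{I_i})^\omega$ the computation $\mathrm{comp}(s,\gamma)\in(2^{V_i})^\omega$ is given by $\mathrm{comp}(s,\gamma)_j=\gamma_j\cup s(\gamma_0\cdots\gamma_{j-1})$ for all $j\ge 0$. A strategy $s$ for $p_i$ is winning for $\varphi$ if $\mathrm{comp}(s,\gamma)\models\varphi$ for all $\gamma\in(2^{I_i})^\omega$. Delay-dominance game. Let $\mathcal{A}=(Q,q_0,\delta,F)$ be an ACA and $\sigma,\sigma'$ infinite words over its alphabet. The game $(\mathcal{A},\sigma,\sigma')$ is played between Duplicator (Player 0) and Spoiler (Player 1) on positions of the forms $((p,q),j)$ and $((p,q,c,c'),j)$ (owned by Spoiler) and $((p,q,c),j)$ and $((p,q,c,q'),j)$ (owned by Duplicator), with $p,q,q'\in Q$, $c,c'\subseteq Q$, $j\in\mathbb{N}$. Moves: from $((p,q),j)$ to $((p,q,c),j)$ with $c\in\delta(p,\sigma_j)$; from $((p,q,c),j)$ to $((p,q,c,c'),j)$ with $c'\in\delta(q,\sigma'_j)$; from $((p,q,c,c'),j)$ to $((p,q,c,q'),j)$ with $q'\in c'$; from $((p,q,c,q'),j)$ to $((p',q'),j+1)$ with $p'\in c$. The initial position is $((q_0,q_0),0)$. For a position whose state tuple is $(p,q)$, $(p,q,c)$, $(p,q,c,c')$ or $(p,q,c,q')$,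 its alternative state is $p$ and its dominant state is $q$. A play $\rho_0\rho_1\cdots$ is won by Duplicator iff for every $k$ such that the dominant state of $\rho_k$ lies in $F$ there is $k'\ge k$ such that the alternative state of $\rho_{k'}$ lies in $F$. A strategy of a player maps finite play prefixes ending in one of its positions to a legal successor; a Duplicator strategy is winning if every play from the initial position consistent with it is won by Duplicator. Delay-dominance. For strategies $s,t$ of $p_i$, an ACA $\mathcal{A}$ over $2^{V_i}$ and $\gamma\in(2^{I_i})^\omega$: $s$ delay-dominates $t$ on $\gamma$ if Duplicator has a winning strategy in $(\mathcal{A},\mathrm{comp}(t,\gamma),\mathrm{comp}(s,\gamma))$; $s$ delay-dominates $t$ if this holds for all $\gamma$; $s$ is delay-dominant for $\mathcal{A}$ (and $p_i$) if it delay-dominates every strategy $t$ for $p_i$. *)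

theory Defs
  imports Main
begin

datatype 'a ltl =
    LTrue
  | LProp 'a
  | LNot "'a ltl"
  | LAnd "'a ltl" "'a ltl"
  | LNext "'a ltl"
  | LUntil "'a ltl" "'a ltl"

type_synonym 'a word = "nat \<Rightarrow> 'a set"

primrec ltl_sat :: "'a word \<Rightarrow> 'a ltl \<Rightarrow> bool" where
  "ltl_sat w LTrue = True"
| "ltl_sat w (LProp a) = (a \<in> w 0)"
| "ltl_sat w (LNot f) = (\<not> ltl_sat w f)"
| "ltl_sat w (LAnd f g) = (ltl_sat w f \<and> ltl_sat w g)"
| "ltl_sat w (LNext f) = ltl_sat (\<lambda>k. w (Suc k)) f"
| "ltl_sat w (LUntil f g) =
     (\<exists>i. ltl_sat (\<lambda>k. w (i + k)) g \<and> (\<forall>j<i. ltl_sat (\<lambda>k. w (j + k)) f))"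

primrec ltl_atoms :: "'a ltl \<Rightarrow> 'a set" where
  "ltl_atoms LTrue = {}"
| "ltl_atoms (LProp a) = {a}"
| "ltl_atoms (LNot f) = ltl_atoms f"
| "ltl_atoms (LAnd f g) = ltl_atoms f \<union> ltl_atoms g"
| "ltl_atoms (LNext f) = ltl_atoms f"
| "ltl_atoms (LUntil f g) = ltl_atoms f \<union> ltl_atoms g"

definition words_over :: "'a set \<Rightarrow> 'a word set" where
  "words_over AP = {w. \<forall>j. w j \<subseteq> AP}"

definition ltl_lang :: "'a set \<Rightarrow> 'a ltl \<Rightarrow> 'a word set" where
  "ltl_lang AP f = {w \<in> words_over AP. ltl_sat w f}"

text \<open>trans q a is the set of disjuncts (each a set of states) of the DNF delta(q,a).\<close>
record ('q, 'a) aca =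
  states :: "'q set"
  init :: 'q
  trans :: "'q \<Rightarrow> 'a set \<Rightarrow> 'q set set"
  rej :: "'q set"

definition aca_wf :: "'a set \<Rightarrow> ('q, 'a) aca \<Rightarrow> bool" where
  "aca_wf AP A \<longleftrightarrow>
     finite AP \<and> finite (states A) \<and> init A \<in> states A \<and> rej A \<subseteq> states A \<and>
     (\<forall>q \<in> states A. \<forall>a. a \<subseteq> AP \<longrightarrow>
        trans A q a \<noteq> {} \<and> finite (trans A q a) \<and>
        (\<forall>c \<in> trans A q a. c \<noteq> {} \<and> c \<subseteq> states A))"

definition run_tree :: "('q, 'a) aca \<Rightarrow> 'a word \<Rightarrow> nat list set \<Rightarrow> (nat list \<Rightarrow> 'q) \<Rightarrow> bool" where
  "run_tree A w T l \<longleftrightarrow>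
     [] \<in> T \<and> (\<forall>x y. x @ y \<in> T \<longrightarrow> x \<in> T) \<and> l [] = init A \<and>
     (\<forall>x \<in> T. {l (x @ [n]) | n. x @ [n] \<in> T} \<in> trans A (l x) (w (length x)))"

definition infinite_branch :: "nat list set \<Rightarrow> (nat \<Rightarrow> nat list) \<Rightarrow> bool" where
  "infinite_branch T b \<longleftrightarrow> b 0 = [] \<and> (\<forall>k. b k \<in> T \<and> (\<exists>n. b (Suc k) = b k @ [n]))"

definition accepting_run :: "('q, 'a) aca \<Rightarrow> nat list set \<Rightarrow> (nat list \<Rightarrow> 'q) \<Rightarrow> bool" where
  "accepting_run A T l \<longleftrightarrow>
     (\<forall>b. infinite_branch T b \<longrightarrow> finite {k. l (b k) \<in> rej A})"

definition aca_accepts :: "('q, 'a) aca \<Rightarrow> 'a word \<Rightarrow> bool" where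
  "aca_accepts A w \<longleftrightarrow> (\<exists>T l. run_tree A w T l \<and> accepting_run A T l)"

definition aca_lang :: "'a set \<Rightarrow> ('q, 'a) aca \<Rightarrow> 'a word set" where
  "aca_lang AP A = {w \<in> words_over AP. aca_accepts A w}"

definition finite_moore :: "'v set \<Rightarrow> ('v set list \<Rightarrow> 'v set) \<Rightarrow> bool" where
  "finite_moore I s \<longleftrightarrow>
     (\<exists>(S :: nat set) m0 tr out. finite S \<and> m0 \<in> S \<and>
        (\<forall>m \<in> S. \<forall>a. a \<subseteq> I \<longrightarrow> tr m a \<in> S) \<and>
        (\<forall>u. set u \<subseteq> Pow I \<longrightarrow> s u = out (foldl tr m0 u)))"

definition is_strategy :: "'v set \<Rightarrow> 'v set \<Rightarrow> ('v set list \<Rightarrow> 'v set) \<Rightarrow> bool" where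
  "is_strategy I Out s \<longleftrightarrow> (\<forall>u. set u \<subseteq> Pow I \<longrightarrow> s u \<subseteq> Out) \<and> finite_moore I s"

definition comp :: "('v set list \<Rightarrow> 'v set) \<Rightarrow> 'v word \<Rightarrow> 'v word" where
  "comp s g = (\<lambda>j. g j \<union> s (map g [0..<j]))"

definition winning :: "'v set \<Rightarrow> ('v set list \<Rightarrow> 'v set) \<Rightarrow> 'v ltl \<Rightarrow> bool" where
  "winning I s f \<longleftrightarrow> (\<forall>g \<in> words_over I. ltl_sat (comp s g) f)"

datatype 'q gpos =
    SpA 'q 'q nat
  | DuA 'q 'q "'q set" nat
  | SpB 'q 'q "'q set" "'q set" nat
  | DuB 'q 'q "'q set" 'q nat

fun alt_state :: "'q gpos \<Rightarrow> 'q" where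
  "alt_state (SpA p q j) = p"
| "alt_state (DuA p q c j) = p"
| "alt_state (SpB p q c c' j) = p"
| "alt_state (DuB p q c q' j) = p"

fun dom_state :: "'q gpos \<Rightarrow> 'q" where
  "dom_state (SpA p q j) = q"
| "dom_state (DuA p q c j) = q"
| "dom_state (SpB p q c c' j) = q"
| "dom_state (DuB p q c q' j) = q"

fun dup_pos :: "'q gpos \<Rightarrow> bool" where
  "dup_pos (SpA p q j) = False"
| "dup_pos (DuA p q c j) = True"
| "dup_pos (SpB p q c c' j) = False"
| "dup_pos (DuB p q c q' j) = True"

fun gmove :: "('q, 'a) aca \<Rightarrow> 'a word \<Rightarrow> 'a word \<Rightarrow> 'q gpos \<Rightarrow> 'q gpos \<Rightarrow> bool" where
  "gmove A w w' (SpA p q j) y = (\<exists>c \<in> trans A p (w j). y = DuA p q c j)"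
| "gmove A w w' (DuA p q c j) y = (\<exists>c' \<in> trans A q (w' j). y = SpB p q c c' j)"
| "gmove A w w' (SpB p q c c' j) y = (\<exists>q' \<in> c'. y = DuB p q c q' j)"
| "gmove A w w' (DuB p q c q' j) y = (\<exists>p' \<in> c. y = SpA p' q' (Suc j))"

definition init_pos :: "('q, 'a) aca \<Rightarrow> 'q gpos" where
  "init_pos A = SpA (init A) (init A) 0"

definition consistent_prefix ::
  "('q, 'a) aca \<Rightarrow> 'a word \<Rightarrow> 'a word \<Rightarrow> ('q gpos list \<Rightarrow> 'q gpos) \<Rightarrow> 'q gpos list \<Rightarrow> bool" where
  "consistent_prefix A w w' f xs \<longleftrightarrow>
     xs \<noteq> [] \<and> xs ! 0 = init_pos A \<and>
     (\<forall>k. Suc k < length xs \<longrightarrow> gmove A w w' (xs ! k) (xs ! Suc k) \<and>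
        (dup_pos (xs ! k) \<longrightarrow> xs ! Suc k = f (take (Suc k) xs)))"

definition dup_strategy ::
  "('q, 'a) aca \<Rightarrow> 'a word \<Rightarrow> 'a word \<Rightarrow> ('q gpos list \<Rightarrow> 'q gpos) \<Rightarrow> bool" where
  "dup_strategy A w w' f \<longleftrightarrow>
     (\<forall>xs. consistent_prefix A w w' f xs \<and> dup_pos (last xs) \<longrightarrow> gmove A w w' (last xs) (f xs))"

definition consistent_play ::
  "('q, 'a) aca \<Rightarrow> 'a word \<Rightarrow> 'a word \<Rightarrow> ('q gpos list \<Rightarrow> 'q gpos) \<Rightarrow> (nat \<Rightarrow> 'q gpos) \<Rightarrow> bool" where
  "consistent_play A w w' f r \<longleftrightarrow>
     r 0 = init_pos A \<and>
     (\<forall>k. gmove A w w' (r k) (r (Suc k)) \<and>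
        (dup_pos (r k) \<longrightarrow> r (Suc k) = f (map r [0..<Suc k])))"

definition dup_won :: "('q, 'a) aca \<Rightarrow> (nat \<Rightarrow> 'q gpos) \<Rightarrow> bool" where
  "dup_won A r \<longleftrightarrow> (\<forall>k. dom_state (r k) \<in> rej A \<longrightarrow> (\<exists>k'\<ge>k. alt_state (r k') \<in> rej A))"

definition dup_wins :: "('q, 'a) aca \<Rightarrow> 'a word \<Rightarrow> 'a word \<Rightarrow> bool" where
  "dup_wins A w w' \<longleftrightarrow>
     (\<exists>f. dup_strategy A w w' f \<and> (\<forall>r. consistent_play A w w' f r \<longrightarrow> dup_won A r))"

definition delay_dominates ::
  "('q, 'v) aca \<Rightarrow> 'v set \<Rightarrow> ('v set list \<Rightarrow> 'v set) \<Rightarrow> ('v set list \<Rightarrow> 'v set) \<Rightarrow> bool" where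
  "delay_dominates A I s t \<longleftrightarrow> (\<forall>g \<in> words_over I. dup_wins A (comp t g) (comp s g))"

definition delay_dominant ::
  "('q, 'v) aca \<Rightarrow> 'v set \<Rightarrow> 'v set \<Rightarrow> ('v set list \<Rightarrow> 'v set) \<Rightarrow> bool" where
  "delay_dominant A I Out s \<longleftrightarrow> (\<forall>t. is_strategy I Out t \<longrightarrow> delay_dominates A I s t)"

end

theory Submission
  imports Defs "HOL-Library.Countable_Set"
begin

fun sel_c' :: "'q gpos \<Rightarrow> 'q set" where
  "sel_c' (SpB p q c c' j) = c'"
| "sel_c' _ = {}"

definition stp :: "('q gpos list \<Rightarrow> 'q gpos) \<Rightarrow> nat list set \<Rightarrow> (nat list \<Rightarrow> 'q)
   \<Rightarrow> ('q gpos list \<times> nat list) \<Rightarrow> nat \<Rightarrow> ('q gpos list \<times> nat list)" where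
  "stp f T l st n = (let h = fst st; y = snd st; p = l y; q = dom_state (last h); j = length y;
     c = {l (y @ [m]) | m. y @ [m] \<in> T}; h1 = h @ [DuA p q c j];
     q' = from_nat_into (sel_c' (f h1)) n; h3 = h1 @ [f h1, DuB p q c q' j];
     p' = alt_state (f h3); m = (SOME m. y @ [m] \<in> T \<and> l (y @ [m]) = p') in
     (h3 @ [f h3], y @ [m]))"

definition inv where
  "inv A w w' f T l st \<longleftrightarrow> consistent_prefix A w w' f (fst st) \<and> snd st \<in> T \<and>
     length (fst st) = Suc (4 * length (snd st)) \<and>
     (\<exists>q \<in> states A. last (fst st) = SpA (l (snd st)) q (length (snd st)))"

lemma cp_snoc:
  assumes "consistent_prefix A w w' f xs" "gmove A w w' (last xs) z"
    "dup_pos (last xs) \<Longrightarrow> z = f xs"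
  shows "consistent_prefix A w w' f (xs @ [z])"
proof -
  have ne: "xs \<noteq> []" using assms(1) by (simp add: consistent_prefix_def)
  have 0: "(xs @ [z]) ! 0 = init_pos A" using ne assms(1)
      by (simp add: consistent_prefix_def nth_append)
  have k: "gmove A w w' ((xs @ [z]) ! k) ((xs @ [z]) ! Suc k) \<and>
      (dup_pos ((xs @ [z]) ! k) \<longrightarrow> (xs @ [z]) ! Suc k = f (take (Suc k) (xs @ [z])))"
    if k: "Suc k < length (xs @ [z])" for k
    proof (cases "Suc k < length xs")
      case True
      then show ?thesis using assms(1) by (simp add: consistent_prefix_def nth_append)
    next
      case False
      then have e: "Suc k = length xs" using k by simp
      then have "xs ! k = last xs" using ne by (metis diff_Suc_1 last_conv_nth)
      then show ?thesis using e assms(2,3) by (simp add: nth_append)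
    qed
  show ?thesis unfolding consistent_prefix_def using 0 k by simp
qed

lemma step_lemma:
  assumes wf: "aca_wf AP A" and w': "w' \<in> words_over AP"
    and ds: "dup_strategy A w w' f" and rt: "run_tree A w T l"
    and iv: "inv A w w' f T l (h, y)" and lh: "last h = SpA (l y) q (length y)"
    and qs: "q \<in> states A"
  shows "sel_c' (f (h @ [DuA (l y) q {l (y @ [m]) | m. y @ [m] \<in> T} (length y)]))
            \<in> trans A q (w' (length y))"
    and "sel_c' (f (h @ [DuA (l y) q {l (y @ [m]) | m. y @ [m] \<in> T} (length y)])) \<noteq> {}"
    and "inv A w w' f T l (stp f T l (h, y) n)"
    and "\<exists>a b c d. fst (stp f T l (h, y) n) = h @ [a, b, c, d] \<and>
            alt_state a = l y \<and> alt_state b = l y \<and> alt_state c = l y"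
    and "\<exists>m. snd (stp f T l (h, y) n) = y @ [m]"
    and "dom_state (last (fst (stp f T l (h, y) n))) =
          from_nat_into (sel_c' (f (h @ [DuA (l y) q {l (y @ [m]) | m. y @ [m] \<in> T} (length y)]))) n"
proof -
  define p where "p = l y"
  define j where "j = length y"
  define C where "C = {l (y @ [m]) | m. y @ [m] \<in> T}"
  define h1 where "h1 = h @ [DuA p q C j]"
  have cp: "consistent_prefix A w w' f h" and yT: "y \<in> T"
    and lenh: "length h = Suc (4 * length y)" using iv by (auto simp: inv_def)
  have CT: "C \<in> trans A p (w j)" using rt yT by (auto simp: run_tree_def C_def p_def j_def)
  have cp1: "consistent_prefix A w w' f h1" unfolding h1_def
    by (rule cp_snoc[OF cp]) (use lh CT in \<open>auto simp: p_def j_def\<close>)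
  have "gmove A w w' (last h1) (f h1)" using ds cp1 by (auto simp: dup_strategy_def h1_def)
  then obtain c' where c'T: "c' \<in> trans A q (w' j)" and fh1: "f h1 = SpB p q C c' j"
    by (auto simp: h1_def)
  have sel: "sel_c' (f h1) = c'" using fh1 by simp
  have wfq: "trans A q (w' j) \<noteq> {} \<and> finite (trans A q (w' j)) \<and>
      (\<forall>c\<in>trans A q (w' j). c \<noteq> {} \<and> c \<subseteq> states A)"
  proof -
    have "w' j \<subseteq> AP" using w' by (auto simp: words_over_def)
    then show ?thesis using wf qs unfolding aca_wf_def by blast
  qed
  have c'ne: "c' \<noteq> {}" and c'st: "c' \<subseteq> states A" using wfq c'T by auto
  show "sel_c' (f (h @ [DuA (l y) q {l (y @ [m]) | m. y @ [m] \<in> T} (length y)]))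
            \<in> trans A q (w' (length y))"
    using sel c'T by (simp add: h1_def p_def C_def j_def)
  show "sel_c' (f (h @ [DuA (l y) q {l (y @ [m]) | m. y @ [m] \<in> T} (length y)])) \<noteq> {}"
    using sel c'ne by (simp add: h1_def p_def C_def j_def)
  define q' where "q' = from_nat_into c' n"
  have q'c: "q' \<in> c'" using c'ne by (simp add: q'_def from_nat_into)
  define h2 where "h2 = h1 @ [f h1]"
  have cp2: "consistent_prefix A w w' f h2" unfolding h2_def
    by (rule cp_snoc[OF cp1]) (use ds cp1 in \<open>auto simp: dup_strategy_def h1_def\<close>)
  define h3 where "h3 = h2 @ [DuB p q C q' j]"
  have cp3: "consistent_prefix A w w' f h3" unfolding h3_def
    by (rule cp_snoc[OF cp2]) (use fh1 q'c in \<open>auto simp: h2_def\<close>)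
  have "gmove A w w' (last h3) (f h3)" using ds cp3 by (auto simp: dup_strategy_def h3_def)
  then obtain p' where p'C: "p' \<in> C" and fh3: "f h3 = SpA p' q' (Suc j)"
    by (auto simp: h3_def)
  define h4 where "h4 = h3 @ [f h3]"
  have cp4: "consistent_prefix A w w' f h4" unfolding h4_def
    by (rule cp_snoc[OF cp3]) (use ds cp3 in \<open>auto simp: dup_strategy_def h3_def\<close>)
  have "\<exists>m. y @ [m] \<in> T \<and> l (y @ [m]) = p'" using p'C by (auto simp: C_def)
  define m0 where "m0 = (SOME m. y @ [m] \<in> T \<and> l (y @ [m]) = p')"
  have m0: "y @ [m0] \<in> T \<and> l (y @ [m0]) = p'"
    unfolding m0_def by (rule someI_ex) fact
  have dq: "dom_state (last h) = q" using lh by simp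
  have st: "stp f T l (h, y) n = (h4, y @ [m0])"
  proof -
    have "stp f T l (h, y) n = (h1 @ [f h1, DuB p q C (from_nat_into (sel_c' (f h1)) n) j]
        @ [f (h1 @ [f h1, DuB p q C (from_nat_into (sel_c' (f h1)) n) j])],
        y @ [SOME m. y @ [m] \<in> T \<and> l (y @ [m]) =
           alt_state (f (h1 @ [f h1, DuB p q C (from_nat_into (sel_c' (f h1)) n) j]))])"
      by (simp add: stp_def Let_def dq h1_def p_def C_def j_def)
    then show ?thesis
      using fh3 by (simp add: sel q'_def h4_def h3_def h2_def m0_def)
  qed
  show "inv A w w' f T l (stp f T l (h, y) n)"
    unfolding st inv_def using cp4 m0 lenh q'c c'st fh3
    by (auto simp: h4_def h3_def h2_def h1_def j_def)
  show "\<exists>a b c d. fst (stp f T l (h, y) n) = h @ [a, b, c, d] \<and>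
            alt_state a = l y \<and> alt_state b = l y \<and> alt_state c = l y"
    unfolding st using fh1 by (auto simp: h4_def h3_def h2_def h1_def p_def)
  show "\<exists>m. snd (stp f T l (h, y) n) = y @ [m]" unfolding st by simp
  show "dom_state (last (fst (stp f T l (h, y) n))) =
          from_nat_into (sel_c' (f (h @ [DuA (l y) q {l (y @ [m]) | m. y @ [m] \<in> T} (length y)]))) n"
    unfolding st using fh3 sel by (simp add: h4_def q'_def h1_def p_def C_def j_def)
qed

lemma dom_lang:
  assumes wf: "aca_wf AP A" and w': "w' \<in> words_over AP"
    and acc: "aca_accepts A w" and dw: "dup_wins A w w'"
  shows "aca_accepts A w'"
proof -
  obtain T l where rt: "run_tree A w T l" and ac: "accepting_run A T l"
    using acc by (auto simp: aca_accepts_def)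
  obtain f where ds: "dup_strategy A w w' f"
    and win: "\<And>r. consistent_play A w w' f r \<Longrightarrow> dup_won A r"
    using dw by (auto simp: dup_wins_def)
  define hist where "hist = (\<lambda>x. foldl (stp f T l) ([init_pos A], []) x)"
  have hsnoc: "hist (x @ [n]) = stp f T l (hist x) n" for x n by (simp add: hist_def)
  have h0: "hist [] = ([init_pos A], [])" by (simp add: hist_def)
  have l0: "l [] = init A" and T0: "[] \<in> T" using rt by (auto simp: run_tree_def)
  have i0: "init A \<in> states A" using wf by (auto simp: aca_wf_def)
  have IV: "inv A w w' f T l (hist x) \<and> length (snd (hist x)) = length x" for x
  proof (induction x rule: rev_induct)
    case Nil
    show ?case unfolding h0 inv_def using l0 T0 i0
      by (auto simp: consistent_prefix_def init_pos_def)
  next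
    case (snoc n x)
    obtain h y where hx: "hist x = (h, y)" by fastforce
    have iv: "inv A w w' f T l (h, y)" and ly: "length y = length x" using snoc hx by auto
    then obtain q where q: "q \<in> states A" "last h = SpA (l y) q (length y)"
      by (auto simp: inv_def)
    show ?case unfolding hsnoc hx
      using step_lemma(3,5)[OF wf w' ds rt iv q(2) q(1), of n] ly by auto
  qed
  define l' where "l' = (\<lambda>x. dom_state (last (fst (hist x))))"
  have rt': "run_tree A w' UNIV l'"
    unfolding run_tree_def
  proof (intro conjI ballI allI impI)
    show "l' [] = init A" by (simp add: l'_def h0 init_pos_def)
  next
    fix x :: "nat list"
    obtain h y where hx: "hist x = (h, y)" by fastforce
    have iv: "inv A w w' f T l (h, y)" and ly: "length y = length x" using IV[of x] hx by auto
    then obtain q where q: "q \<in> states A" "last h = SpA (l y) q (length y)"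
      by (auto simp: inv_def)
    have lx: "l' x = q" using q hx by (simp add: l'_def)
    note S = step_lemma[OF wf w' ds rt iv q(2) q(1)]
    define c' where "c' = sel_c' (f (h @ [DuA (l y) q {l (y @ [m]) | m. y @ [m] \<in> T} (length y)]))"
    have "c' \<subseteq> states A" using wf q(1) S(1) w' unfolding c'_def aca_wf_def words_over_def
      by blast
    then have cc: "countable c'" using wf unfolding aca_wf_def
      by (meson countable_finite finite_subset)
    have "{l' (x @ [n]) | n. x @ [n] \<in> UNIV} = range (from_nat_into c')"
      using S(6) hx unfolding l'_def hsnoc c'_def by auto
    also have "\<dots> = c'" using range_from_nat_into[OF S(2)[folded c'_def] cc] .
    finally show "{l' (x @ [n]) | n. x @ [n] \<in> UNIV} \<in> trans A (l' x) (w' (length x))"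
      using S(1) lx ly unfolding c'_def by simp
  qed auto
  have acc': "accepting_run A UNIV l'"
    unfolding accepting_run_def
  proof (intro allI impI)
    fix b assume ib: "infinite_branch UNIV b"
    then have b0: "b 0 = []" and bs: "\<And>k. \<exists>n. b (Suc k) = b k @ [n]"
      by (auto simp: infinite_branch_def)
    define H where "H = (\<lambda>k. fst (hist (b k)))"
    define Y where "Y = (\<lambda>k. snd (hist (b k)))"
    have lb: "length (b k) = k" for k
    proof (induction k)
      case (Suc k) then show ?case using bs[of k] by auto
    qed (simp add: b0)
    have ivk: "inv A w w' f T l (H k, Y k)" for k using IV[of "b k"] by (simp add: H_def Y_def)
    have lY: "length (Y k) = k" for k using IV[of "b k"] lb by (simp add: Y_def)
    have lH: "length (H k) = Suc (4 * k)" for k using ivk[of k] lY[of k] by (simp add: inv_def)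
    have SK: "(\<exists>a b c d. H (Suc k) = H k @ [a, b, c, d] \<and>
            alt_state a = l (Y k) \<and> alt_state b = l (Y k) \<and> alt_state c = l (Y k)) \<and>
           (\<exists>m. Y (Suc k) = Y k @ [m]) \<and>
           (\<exists>q. last (H k) = SpA (l (Y k)) q k)" for k
    proof -
      obtain n where bn: "b (Suc k) = b k @ [n]" using bs by blast
      obtain q where q: "q \<in> states A" "last (H k) = SpA (l (Y k)) q (length (Y k))"
        using ivk[of k] by (auto simp: inv_def)
      have hb: "hist (b (Suc k)) = stp f T l (H k, Y k) n"
        by (simp add: bn hsnoc H_def Y_def)
      note S = step_lemma[OF wf w' ds rt ivk q(2) q(1)]
      have HS: "H (Suc k) = fst (stp f T l (H k, Y k) n)" "Y (Suc k) = snd (stp f T l (H k, Y k) n)"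
        by (simp_all add: H_def Y_def hb[unfolded H_def Y_def])
      show ?thesis using S(4)[of n] S(5)[of n] q lY[of k] HS by auto
    qed
    have pre: "k \<le> k' \<Longrightarrow> \<exists>zs. H k' = H k @ zs" for k k'
    proof (induction k' rule: dec_induct)
      case base then show ?case by simp
    next
      case (step m)
      then show ?case using SK[of m] by fastforce
    qed
    define r where "r = (\<lambda>i. H i ! i)"
    have R: "i < length (H k) \<Longrightarrow> H k ! i = r i" for i k
    proof (cases "k \<le> i")
      case True
      then obtain zs where "H i = H k @ zs" using pre by blast
      moreover assume "i < length (H k)"
      ultimately show ?thesis by (simp add: r_def nth_append)
    next
      case False
      then obtain zs where "H k = H i @ zs" using pre by fastforce
      moreover have "i < length (H i)" using lH by simp
      ultimately show ?thesis by (simp add: r_def nth_append)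
    qed
    have cpl: "consistent_play A w w' f r"
      unfolding consistent_play_def
    proof (intro conjI allI impI)
      show "r 0 = init_pos A" by (simp add: r_def H_def b0 h0)
    next
      fix k
      have cpk: "consistent_prefix A w w' f (H (Suc k))" using ivk by (simp add: inv_def)
      have kl: "Suc k < length (H (Suc k))" using lH by simp
      have tk: "take (Suc k) (H (Suc k)) = map r [0..<Suc k]"
        by (rule nth_equalityI) (use kl R in \<open>simp_all del: upt_Suc\<close>)
      have G: "gmove A w w' (H (Suc k) ! k) (H (Suc k) ! Suc k) \<and>
        (dup_pos (H (Suc k) ! k) \<longrightarrow> H (Suc k) ! Suc k = f (take (Suc k) (H (Suc k))))"
        using cpk kl unfolding consistent_prefix_def by blast
      have e: "H (Suc k) ! k = r k" "H (Suc k) ! Suc k = r (Suc k)"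
        using kl R[of k "Suc k"] R[of "Suc k" "Suc k"] by auto
      show "gmove A w w' (r k) (r (Suc k))" using G e by simp
      assume "dup_pos (r k)"
      then show "r (Suc k) = f (map r [0..<Suc k])"
        using G e tk by (simp del: upt_Suc)
    qed
    have dwr: "dup_won A r" using win cpl .
    have ibY: "infinite_branch T Y" unfolding infinite_branch_def
      using ivk SK by (auto simp: Y_def b0 h0 inv_def)
    have finY: "finite {k. l (Y k) \<in> rej A}" using ac ibY by (simp add: accepting_run_def)
    have alt: "alt_state (r i) = l (Y (i div 4))" for i
    proof -
      define k where "k = i div 4"
      obtain a b c d where hs: "H (Suc k) = H k @ [a, b, c, d]" and
        abc: "alt_state a = l (Y k)" "alt_state b = l (Y k)" "alt_state c = l (Y k)"
        and lq: "\<exists>q. last (H k) = SpA (l (Y k)) q k" using SK[of k] by blast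
      have ik: "4 * k \<le> i" "i < 4 * k + 4" unfolding k_def by auto
      have ri: "r i = H (Suc k) ! i" using R[of i "Suc k"] ik lH by simp
      have "H k ! (4 * k) = last (H k)" using lH[of k] by (metis diff_Suc_1 last_conv_nth length_0_conv nat.simps(3))
      then have "alt_state (H k ! (4 * k)) = l (Y k)" using lq by auto
      moreover have "i = 4 * k \<or> i = 4 * k + 1 \<or> i = 4 * k + 2 \<or> i = 4 * k + 3" using ik by auto
      ultimately show ?thesis using abc lH[of k] unfolding ri hs k_def[symmetric]
        by (auto simp: nth_append)
    qed
    have dom: "dom_state (r (4 * k)) = l' (b k)" for k
    proof -
      have "r (4 * k) = H k ! (4 * k)" using R[of "4*k" k] lH by simp
      also have "\<dots> = last (H k)" using lH[of k] by (metis diff_Suc_1 last_conv_nth length_0_conv nat.simps(3))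
      finally show ?thesis by (simp add: l'_def H_def)
    qed
    obtain N where N: "\<And>k. l (Y k) \<in> rej A \<Longrightarrow> k < N"
      using finY finite_nat_set_iff_bounded by auto
    have "{k. l' (b k) \<in> rej A} \<subseteq> {..<N}"
    proof
      fix k assume "k \<in> {k. l' (b k) \<in> rej A}"
      then have "dom_state (r (4 * k)) \<in> rej A" using dom by simp
      then obtain k' where k': "k' \<ge> 4 * k" "alt_state (r k') \<in> rej A"
        using dwr by (auto simp: dup_won_def)
      then have "k' div 4 < N" using N alt by simp
      moreover have "k \<le> k' div 4" using k' by auto
      ultimately show "k \<in> {..<N}" by simp
    qed
    then show "finite {k. l' (b k) \<in> rej A}" using finite_subset by blast
  qed
  show ?thesis unfolding aca_accepts_def using rt' acc' by blast
qed

theorem lemma6: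
  fixes I Out :: "'v set" and phi :: "'v ltl" and A :: "('q, 'v) aca"
    and s :: "'v set list \<Rightarrow> 'v set"
  assumes "finite I" and "finite Out" and "I \<inter> Out = {}"
    and "ltl_atoms phi \<subseteq> I \<union> Out"
    and "aca_wf (I \<union> Out) A"
    and "aca_lang (I \<union> Out) A = ltl_lang (I \<union> Out) phi"
    and "\<exists>t. is_strategy I Out t \<and> winning I t phi"
    and "is_strategy I Out s"
    and "delay_dominant A I Out s"
  shows "winning I s phi"
proof -
  obtain t where ts: "is_strategy I Out t" and tw: "winning I t phi" using assms(7) by blast
  have cw: "comp x g \<in> words_over (I \<union> Out)" if "is_strategy I Out x" "g \<in> words_over I" for x g
  proof -
    have "set (map g [0..<j]) \<subseteq> Pow I" for j using that(2) by (auto simp: words_over_def)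
    then have "x (map g [0..<j]) \<subseteq> Out" for j using that(1) by (auto simp: is_strategy_def)
    then show ?thesis using that(2) by (auto simp: words_over_def comp_def)
  qed
  show ?thesis unfolding winning_def
  proof
    fix g assume g: "g \<in> words_over I"
    have "comp t g \<in> ltl_lang (I \<union> Out) phi" using cw[OF ts g] tw g
      by (simp add: ltl_lang_def winning_def)
    then have a: "aca_accepts A (comp t g)" using assms(6) unfolding aca_lang_def by blast
    have d: "dup_wins A (comp t g) (comp s g)"
      using assms(9) ts g by (simp add: delay_dominant_def delay_dominates_def)
    have "aca_accepts A (comp s g)" by (rule dom_lang[OF assms(5) cw[OF assms(8) g] a d])
    then have "comp s g \<in> ltl_lang (I \<union> Out) phi"
      using assms(6) cw[OF assms(8) g] by (auto simp: aca_lang_def)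
    then show "ltl_sat (comp s g) phi" by (simp add: ltl_lang_def)
  qed
qed

end
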